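(* For every $M>1$ there exists $c=c(M)>0$ (depending only on $M$, not on $d$ or $T$) such that the following holds. Let $T$ be a directed tree on $[d]$ and let $X=(X_1,\dots,X_d)$ follow the linear structural equation model $X_k=\sum_{j}\beta_{kj}X_j+\eta_k$, where $\beta_{kj}\neq0$ only if $j$ is the parent of $k$ in $T$, and the $\eta_k\sim\mathcal{N}(0,\sigma_k^2)$ are mutually independent. If $|\beta_{kj}|\in[M^{-1},M]$ for every nonzero $\beta_{kj}$ and $\sigma_k^2\in[M^{-1},M]$ for every $k$, then the distribution $P$ of $X$ is $c$-strong tree-faithful to $T$.
   Context: A directed tree on $[d]$ is a directed graph with a root $u$ such that every other node is reached from $u$ by exactly one directed path (so non-root nodes have exactly one parent and there are no v-structures). For $\ell\in([d]\cup\{\emptyset\})\setminus\{j,k\}$, $\rho(X_j,X_k\mid X_\ell)$ denotes the partial correlation given $X_\ell$ (ordinary correlation if $\ell=\emptyset$). $P$ is $c$-strong tree-faithful to a polytree $T$ if (1) for every edge $j-k$ of $T$ and every $\ell\in([d]\cup\{\emptyset\})\setminus\{j,k\}$, $|\rho(X_j,X_k\mid X_\ell)|\ge c$; and (2) for every v-structure $k\to\ell\leftarrow j$ in $T$, $|\rho(X_k,X_j\mid X_\ell)|\ge c$. *)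

theory Defs
  imports Complex_Main
begin

text \<open>Vertices are 0,...,d-1 (the set [d]). A directed graph is a set E of pairs (j,k),
  meaning an edge j \<rightarrow> k.\<close>

definition directed_tree :: "nat \<Rightarrow> (nat \<times> nat) set \<Rightarrow> nat \<Rightarrow> bool" where
  "directed_tree d E u \<longleftrightarrow>
     u < d \<and> E \<subseteq> {..<d} \<times> {..<d} \<and>
     (\<forall>j. (j, u) \<notin> E) \<and>
     (\<forall>k<d. k \<noteq> u \<longrightarrow> (\<exists>!j. (j, k) \<in> E)) \<and>
     (\<forall>k<d. (u, k) \<in> E\<^sup>*)"

text \<open>Covariance matrix of X = (I - B)^{-1} eta with independent eta_a ~ N(0, s2 a):
  Lam is the matrix with X_k = sum_a Lam k a * eta_a, which is characterized by the
  structural equations X_k = sum_j beta k j X_j + eta_k.\<close>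

definition sem_solution :: "nat \<Rightarrow> (nat \<Rightarrow> nat \<Rightarrow> real) \<Rightarrow> (nat \<Rightarrow> nat \<Rightarrow> real) \<Rightarrow> bool" where
  "sem_solution d beta Lam \<longleftrightarrow>
     (\<forall>k<d. \<forall>a<d. Lam k a = (if k = a then 1 else 0) + (\<Sum>j<d. beta k j * Lam j a))"

definition sem_cov :: "nat \<Rightarrow> (nat \<Rightarrow> nat \<Rightarrow> real) \<Rightarrow> (nat \<Rightarrow> real) \<Rightarrow> nat \<Rightarrow> nat \<Rightarrow> real" where
  "sem_cov d Lam s2 j k = (\<Sum>a<d. Lam j a * Lam k a * s2 a)"

text \<open>Correlation and partial correlation given a single variable (None = empty set).\<close>

definition corr :: "(nat \<Rightarrow> nat \<Rightarrow> real) \<Rightarrow> nat \<Rightarrow> nat \<Rightarrow> real" where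
  "corr S j k = S j k / sqrt (S j j * S k k)"

definition pcov :: "(nat \<Rightarrow> nat \<Rightarrow> real) \<Rightarrow> nat \<Rightarrow> nat \<Rightarrow> nat \<Rightarrow> real" where
  "pcov S l j k = S j k - S j l * S l k / S l l"

fun pcorr :: "(nat \<Rightarrow> nat \<Rightarrow> real) \<Rightarrow> nat \<Rightarrow> nat \<Rightarrow> nat option \<Rightarrow> real" where
  "pcorr S j k None = corr S j k"
| "pcorr S j k (Some l) = pcov S l j k / sqrt (pcov S l j j * pcov S l k k)"

definition strong_tree_faithful ::
  "real \<Rightarrow> nat \<Rightarrow> (nat \<times> nat) set \<Rightarrow> (nat \<Rightarrow> nat \<Rightarrow> real) \<Rightarrow> bool" where
  "strong_tree_faithful c d E S \<longleftrightarrow>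
     (\<forall>j k. (j, k) \<in> E \<longrightarrow>
        (\<forall>l \<in> {None} \<union> Some ` ({..<d} - {j, k}). \<bar>pcorr S j k l\<bar> \<ge> c)) \<and>
     (\<forall>k j l. (k, l) \<in> E \<and> (j, l) \<in> E \<and> k \<noteq> j \<and> (k, j) \<notin> E \<and> (j, k) \<notin> E \<longrightarrow>
        \<bar>pcorr S k j (Some l)\<bar> \<ge> c)"

end

theory Submission
  imports Defs
begin


lemma abs_div_sqrt_ge:
  fixes x y c :: real
  assumes "0 < y" "0 \<le> c" "c^2 * y \<le> x^2"
  shows "c \<le> \<bar>x / sqrt y\<bar>"
proof -
  have "c * sqrt y = sqrt (c^2 * y)" using assms by (simp add: real_sqrt_mult)
  also have "\<dots> \<le> sqrt (x^2)" using assms(3) by (rule real_sqrt_le_mono)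
  also have "\<dots> = \<bar>x\<bar>" by simp
  finally have "c * sqrt y \<le> \<bar>x\<bar>" .
  moreover have "sqrt y > 0" using assms by simp
  ultimately show ?thesis by (simp add: abs_div pos_le_divide_eq)
qed

lemma sq1: "(0::real) < M^2+1"
proof - have "0 \<le> M^2" by simp thus ?thesis by linarith qed

lemma quad_bound:
  fixes M s :: real
  assumes "M > 1"
  shows "1/(M^2+1) \<le> (1-s)^2 + s^2/M^2"
proof -
  have "(M^2+1)*((1-s)^2 + s^2/M^2) - 1 = ((M^2+1)*s - M^2)^2/M^2"
    using assms by (simp add: field_simps power2_eq_square)
  also have "\<dots> \<ge> 0" by simp
  finally have "1 \<le> (M^2+1)*((1-s)^2 + s^2/M^2)" by simp
  moreover have "M^2+1 > 0" by (rule sq1)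
  ultimately show ?thesis by (simp add: divide_le_eq mult.commute)
qed

lemma finalA:
  fixes M b W s :: real
  assumes M: "M > 1" and b: "1/M^2 \<le> b^2" and W: "1/(M*(M^2+1)) \<le> W"
    and s: "0 < s" "s \<le> M"
  shows "1/(2*M^6) \<le> \<bar>b*W / sqrt (W*(b^2*W+s))\<bar>"
proof -
  have M0: "M > 0" using M by simp
  have Wp: "W > 0" using W M0 by (smt (verit) divide_pos_pos mult_pos_pos zero_less_power add_pos_pos zero_less_one)
  have P: "1/(M^3*(M^2+1)) \<le> b^2*W"
  proof -
    have "1/(M^3*(M^2+1)) = (1/M^2) * (1/(M*(M^2+1)))" by (simp add: power_def field_simps)
    also have "\<dots> \<le> b^2 * W" using b W by (intro mult_mono) (auto simp: M0 add_pos_nonneg less_imp_le)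
    finally show ?thesis .
  qed
  define P where "P = b^2*W"
  have Pp: "P > 0" using P M0 unfolding P_def by (smt (verit) divide_pos_pos mult_pos_pos zero_less_power add_pos_pos zero_less_one)
  have "s \<le> M^4*(M^2+1) * P"
  proof -
    have n0: "M^3*(M^2+1) \<noteq> 0" using M0 sq1[of M] by simp
    have "M^4*(M^2+1) = M * (M^3*(M^2+1))" by (simp add: power_numeral_reduce)
    hence "M^4*(M^2+1) * (1/(M^3*(M^2+1))) = M" using n0 by simp
    moreover have "M^4*(M^2+1) * (1/(M^3*(M^2+1))) \<le> M^4*(M^2+1) * P"
      using P unfolding P_def by (intro mult_left_mono) (use M0 sq1[of M] in auto)
    ultimately have "M \<le> M^4*(M^2+1) * P" by simp
    thus ?thesis using s by simp
  qed
  hence "P + s \<le> (1 + M^6 + M^4) * P" by (simp add: algebra_simps power_def)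
  also have "\<dots> \<le> (4*M^12) * P"
  proof -
    have "M^4 \<le> M^12" "M^6 \<le> M^12" "1 \<le> M^12" using M by (auto intro: power_increasing)
    thus ?thesis using Pp by (intro mult_right_mono) auto
  qed
  finally have key: "P + s \<le> 4*M^12*P" .
  show ?thesis
  proof (rule abs_div_sqrt_ge)
    show "0 < W*(b^2*W+s)" using Wp s by (simp add: add_nonneg_pos)
    show "0 \<le> 1/(2*M^6)" using M0 by simp
    have "(1/(2*M^6))^2 * (W*(b^2*W+s)) = W * (P+s) / (4*M^12)"
      unfolding P_def by (simp add: power_def field_simps)
    also have "\<dots> \<le> W * (4*M^12*P) / (4*M^12)"
      using key Wp M0 by (intro divide_right_mono mult_left_mono) auto
    also have "\<dots> = (b*W)^2" using M0 unfolding P_def by (simp add: power_def field_simps)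
    finally show "(1/(2*M^6))^2 * (W*(b^2*W+s)) \<le> (b*W)^2" .
  qed
qed

lemma finalB:
  fixes M b V s g F K L :: real
  assumes M: "M > 1" and b: "1/M^2 \<le> b^2" and V: "1/M \<le> V"
    and s: "0 < s" "s \<le> M" and F: "g^2/M^3 \<le> F"
    and hK: "K = b^2*V+s" and hL: "L = g^2*K+F" and L: "0 < L"
  shows "1/(2*M^6) \<le> \<bar>(b*V - (g*(b*V))*(g*K)/L) /
            sqrt ((V - (g*(b*V))*(g*(b*V))/L) * (K - (g*K)*(g*K)/L))\<bar>"
proof -
  have M0: "M > 0" using M by simp
  have Vp: "V > 0" using V M0 by (smt (verit) divide_pos_pos)
  have g0: "g^2/M^3 \<ge> 0" using M0 by simp
  have Fp: "F > 0"
  proof (rule ccontr)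
    assume "\<not> F > 0"
    hence "F = 0" using F g0 by linarith
    hence "g^2/M^3 \<le> 0" using F by simp
    hence "g^2 \<le> 0" using M0 by (simp add: divide_le_0_iff)
    hence "g = 0" by simp
    thus False using L hL \<open>F = 0\<close> by simp
  qed
  have bV: "1/M^3 \<le> b^2*V"
  proof -
    have "1/M^3 = (1/M^2)*(1/M)" by (simp add: power_def)
    also have "\<dots> \<le> b^2*V" using b V M0 by (intro mult_mono) auto
    finally show ?thesis .
  qed
  have A1: "g^2*s + F \<le> (1+M^4)*F"
  proof -
    have "g^2 \<le> M^3 * F" using F M0 by (simp add: divide_le_eq mult.commute)
    hence "g^2*s \<le> M^3*F*M" using s by (intro mult_mono) (auto simp: Fp less_imp_le)
    also have "\<dots> = M^4*F" by (simp add: power_numeral_reduce)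
    finally show ?thesis by (simp add: algebra_simps)
  qed
  have A2: "K \<le> (1+M^4)*(b^2*V)"
  proof -
    have "M = M^4*(1/M^3)" using M0 by (simp add: power_numeral_reduce)
    also have "\<dots> \<le> M^4*(b^2*V)" using bV by (intro mult_left_mono) auto
    finally show ?thesis using hK s by (simp add: algebra_simps)
  qed
  have bVp: "b^2*V > 0" using bV M0 by (smt (verit) divide_pos_pos zero_less_power)
  have "(g^2*s + F)*K \<le> ((1+M^4)*F)*((1+M^4)*(b^2*V))"
    using A1 A2 Fp bVp s hK by (intro mult_mono) (auto simp: add_nonneg_nonneg)
  also have "\<dots> = (1+M^4)^2 * (F*(b^2*V))" by (simp add: power2_eq_square algebra_simps)
  also have "\<dots> \<le> (4*M^12) * (F*(b^2*V))"
  proof (rule mult_right_mono)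
    have "1 \<le> M^4" "M^4 \<le> M^6" using M by (auto intro: one_le_power power_increasing)
    hence "(1+M^4)^2 \<le> (2*M^4)^2" by (intro power_mono) auto
    also have "\<dots> = 4*M^8" by (simp add: power_mult_distrib flip: power_mult)
    also have "\<dots> \<le> 4*M^12" using M by (auto intro: power_increasing)
    finally show "(1+M^4)^2 \<le> 4*M^12" .
  qed (use Fp bVp in auto)
  finally have key: "(g^2*s + F)*K \<le> 4*M^12 * (F*(b^2*V))" .
  have L0: "L \<noteq> 0" using L by simp
  have ex: "b*V - (g*(b*V))*(g*K)/L = b*V*F/L" using L0 hL by (simp add: field_simps power2_eq_square)
  have ej: "V - (g*(b*V))*(g*(b*V))/L = V*(g^2*s+F)/L" using L0 hL hK
    by (simp add: field_simps power2_eq_square)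
  have ek: "K - (g*K)*(g*K)/L = K*F/L" using L0 hL by (simp add: field_simps power2_eq_square)
  have Kp: "K > 0" using hK bVp s by simp
  have gsF: "g^2*s+F > 0" using Fp s by (simp add: add_nonneg_pos)
  show ?thesis unfolding ex ej ek
  proof (rule abs_div_sqrt_ge)
    show "0 < V*(g^2*s+F)/L * (K*F/L)" using Vp gsF Kp Fp L by simp
    show "0 \<le> 1/(2*M^6)" using M0 by simp
    have "(1/(2*M^6))^2 * (V*(g^2*s+F)/L * (K*F/L)) = (V*F/L^2) * ((g^2*s + F)*K) / (4*M^12)"
      by (simp add: power_def field_simps)
    also have "\<dots> \<le> (V*F/L^2) * (4*M^12 * (F*(b^2*V))) / (4*M^12)"
      using key Vp Fp M0 by (intro divide_right_mono mult_left_mono) auto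
    also have "\<dots> = (b*V*F/L)^2" using M0 by (simp add: power_def field_simps)
    finally show "(1/(2*M^6))^2 * (V*(g^2*s+F)/L * (K*F/L)) \<le> (b*V*F/L)^2" .
  qed
qed



locale tsetup =
  fixes d :: nat and E :: "(nat \<times> nat) set" and u :: nat
    and beta :: "nat \<Rightarrow> nat \<Rightarrow> real" and Lam :: "nat \<Rightarrow> nat \<Rightarrow> real"
  assumes tree: "directed_tree d E u"
    and bE: "\<forall>k<d. \<forall>j<d. beta k j \<noteq> 0 \<longleftrightarrow> (j, k) \<in> E"
    and sol: "sem_solution d beta Lam"
begin

lemma Esub: "(j,k) \<in> E \<Longrightarrow> j < d \<and> k < d"
  using tree unfolding directed_tree_def by blast

lemma noin_u: "(j,u) \<notin> E"
  using tree unfolding directed_tree_def by blast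

lemma u_lt: "u < d" using tree unfolding directed_tree_def by blast

lemma reach: "k < d \<Longrightarrow> (u,k) \<in> E\<^sup>*"
  using tree unfolding directed_tree_def by blast

lemma uniq_par: "(p,k) \<in> E \<Longrightarrow> (q,k) \<in> E \<Longrightarrow> p = q"
proof -
  assume a: "(p,k) \<in> E" "(q,k) \<in> E"
  hence "k < d" "k \<noteq> u" using Esub noin_u by auto
  thus "p = q" using a tree unfolding directed_tree_def by blast
qed

lemma row: assumes "(p,k) \<in> E" "a < d"
  shows "Lam k a = (if k = a then 1 else 0) + beta k p * Lam p a"
proof -
  have kd: "k < d" and pd: "p < d" using Esub assms by auto
  have "(\<Sum>j<d. beta k j * Lam j a) = beta k p * Lam p a"
  proof (rule sum.mono_neutral_right[of "{..<d}" "{p}", simplified])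
    show "p < d" by (rule pd)
    show "\<forall>j\<in>{..<d} - {p}. beta k j * Lam j a = 0"
    proof
      fix j assume j: "j \<in> {..<d} - {p}"
      have "beta k j = 0"
      proof (rule ccontr)
        assume "beta k j \<noteq> 0"
        hence "(j,k) \<in> E" using bE kd j by auto
        hence "j = p" using uniq_par assms(1) by blast
        thus False using j by simp
      qed
      thus "beta k j * Lam j a = 0" by simp
    qed
  qed
  thus ?thesis using sol kd assms(2) unfolding sem_solution_def by auto
qed

lemma row_u: assumes "a < d" shows "Lam u a = (if u = a then 1 else 0)"
proof -
  have "(\<Sum>j<d. beta u j * Lam j a) = 0"
  proof (rule sum.neutral, rule ballI)
    fix j assume "j \<in> {..<d}"
    hence "beta u j = 0" using bE u_lt noin_u by auto
    thus "beta u j * Lam j a = 0" by simp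
  qed
  thus ?thesis using sol u_lt assms unfolding sem_solution_def by auto
qed

lemma acyc_reach: "(u,x) \<in> E\<^sup>* \<Longrightarrow> (x,x) \<notin> E\<^sup>+"
proof (induction rule: rtrancl_induct)
  case base
  show ?case
  proof
    assume "(u,u) \<in> E\<^sup>+"
    then obtain z where "(z,u) \<in> E" by (meson tranclE)
    thus False using noin_u by blast
  qed
next
  case (step y x)
  show ?case
  proof
    assume "(x,x) \<in> E\<^sup>+"
    then obtain z where z: "(x,z) \<in> E\<^sup>*" "(z,x) \<in> E" by (meson rtranclE tranclD2)
    hence "z = y" using uniq_par step by blast
    hence "(y,y) \<in> E\<^sup>+" using z step(2) by (meson rtrancl_into_trancl2)
    thus False using step by blast
  qed
qed

lemma acyc: "(x,x) \<notin> E\<^sup>+"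
proof
  assume h: "(x,x) \<in> E\<^sup>+"
  then obtain z where "(z,x) \<in> E" by (meson tranclE)
  hence "x < d" using Esub by blast
  thus False using acyc_reach reach h by blast
qed

lemma cyc2: "(a,b) \<in> E\<^sup>+ \<Longrightarrow> (b,a) \<in> E\<^sup>* \<Longrightarrow> False"
  using acyc by (meson trancl_rtrancl_trancl)

lemma support_reach: "(u,x) \<in> E\<^sup>* \<Longrightarrow> a < d \<Longrightarrow> Lam x a \<noteq> 0 \<Longrightarrow> (a,x) \<in> E\<^sup>*"
proof (induction arbitrary: a rule: rtrancl_induct)
  case base
  thus ?case using row_u by (auto split: if_splits)
next
  case (step y x)
  show ?case
  proof (cases "x = a")
    case True thus ?thesis by simp
  next
    case False
    hence "Lam y a \<noteq> 0" using row[OF step(2) step(4)] step(5) by auto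
    hence "(a,y) \<in> E\<^sup>*" using step by blast
    thus ?thesis using step(2) by simp
  qed
qed

lemma support: "x < d \<Longrightarrow> a < d \<Longrightarrow> Lam x a \<noteq> 0 \<Longrightarrow> (a,x) \<in> E\<^sup>*"
  using support_reach reach by blast

lemma diag: assumes "k < d" shows "Lam k k = 1"
proof (cases "k = u")
  case True thus ?thesis using row_u assms by simp
next
  case False
  then obtain p where p: "(p,k) \<in> E" using tree assms unfolding directed_tree_def by blast
  have "Lam p k = 0"
  proof (rule ccontr)
    assume "Lam p k \<noteq> 0"
    hence "(k,p) \<in> E\<^sup>*" using support Esub p assms by blast
    thus False using cyc2 p by blast
  qed
  thus ?thesis using row[OF p assms] by simp
qed

lemma path_prod:
  assumes "(m,l) \<in> E\<^sup>*" "m < d" "a < d" "(m,a) \<notin> E\<^sup>+"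
  shows "Lam l a = Lam l m * Lam m a"
  using assms(1)
proof (induction rule: rtrancl_induct)
  case base thus ?case using diag assms by simp
next
  case (step y l)
  have ml: "(m,l) \<in> E\<^sup>+" using step by simp
  hence "l \<noteq> a" using assms by blast
  moreover have "l \<noteq> m" using ml acyc by blast
  ultimately show ?case using row[OF step(2) assms(3)] row[OF step(2) assms(2)] step(3) by simp
qed

lemma desc_zero:
  assumes "(k,a) \<in> E\<^sup>+" "(x,k) \<in> E\<^sup>*" "x < d" "a < d"
  shows "Lam x a = 0"
proof (rule ccontr)
  assume "Lam x a \<noteq> 0"
  hence "(a,x) \<in> E\<^sup>*" using support assms by blast
  hence "(a,k) \<in> E\<^sup>*" using assms(2) by simp
  thus False using cyc2 assms(1) by blast
qed

end


locale msetup = tsetup +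
  fixes s2 :: "nat \<Rightarrow> real" and M :: real
  assumes bM: "\<forall>k<d. \<forall>j<d. beta k j \<noteq> 0 \<longrightarrow> \<bar>beta k j\<bar> \<in> {1/M..M}"
    and sM: "\<forall>k<d. s2 k \<in> {1/M..M}"
    and M1: "M > 1"
begin

abbreviation "S \<equiv> sem_cov d Lam s2"

lemma M0: "M > 0" using M1 by simp

lemma s2pos: "a < d \<Longrightarrow> s2 a > 0"
  using sM M0 by (smt (verit) atLeastAtMost_iff divide_pos_pos)

lemma s2lo: "a < d \<Longrightarrow> 1/M \<le> s2 a" using sM by auto
lemma s2hi: "a < d \<Longrightarrow> s2 a \<le> M" using sM by auto

lemma Ssym: "S j k = S k j"
  unfolding sem_cov_def by (simp add: mult.commute mult.left_commute)

lemma edge_beta: assumes "(j,k) \<in> E"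
  shows "beta k j \<noteq> 0" "1/M^2 \<le> (beta k j)^2" "\<bar>beta k j\<bar> \<le> M"
proof -
  have jk: "j < d" "k < d" using Esub assms by auto
  show b0: "beta k j \<noteq> 0" using bE jk assms by auto
  hence b: "1/M \<le> \<bar>beta k j\<bar>" "\<bar>beta k j\<bar> \<le> M" using bM jk by auto
  thus "\<bar>beta k j\<bar> \<le> M" by simp
  have "(1/M)^2 \<le> \<bar>beta k j\<bar>^2" using b M0 by (intro power_mono) auto
  thus "1/M^2 \<le> (beta k j)^2" by (simp add: power_divide)
qed

lemma sqnn: "a < d \<Longrightarrow> 0 \<le> v * v * s2 a"
  using s2pos[of a] by (simp add: less_imp_le)

lemma Sdiag: assumes "x < d" shows "1/M \<le> S x x"
proof -
  have "s2 x = Lam x x * Lam x x * s2 x" using diag assms by simp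
  also have "\<dots> \<le> S x x" unfolding sem_cov_def
    by (rule member_le_sum) (use assms sqnn in auto)
  finally show ?thesis using s2lo[OF assms] by linarith
qed

lemma E1: assumes "(j,k) \<in> E" "x < d"
  shows "S k x = Lam x k * s2 k + beta k j * S j x"
proof -
  have kd: "k < d" using Esub assms by auto
  have "S k x = (\<Sum>a<d. (if k = a then Lam x a * s2 a else 0) + beta k j * (Lam j a * Lam x a * s2 a))"
    unfolding sem_cov_def by (rule sum.cong) (auto simp: row[OF assms(1)] algebra_simps)
  also have "\<dots> = Lam x k * s2 k + beta k j * S j x"
    unfolding sem_cov_def by (simp add: sum.distrib sum_distrib_left kd)
  finally show ?thesis .
qed

lemma W_bound:
  assumes jd: "j < d" and ld: "l < d" and lj: "l \<noteq> j"
  shows "1/(M*(M^2+1)) \<le> S j j - S j l * S l j / S l l"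
proof -
  define C where "C = S j l"
  define L where "L = S l l"
  define t where "t = C / L"
  have Lp: "L > 0" using Sdiag[OF ld] M0 unfolding L_def by (smt (verit) divide_pos_pos)
  define Q where "Q = (\<Sum>a<d. (Lam j a - t * Lam l a) * (Lam j a - t * Lam l a) * s2 a)"
  have "Q = (\<Sum>a<d. Lam j a * Lam j a * s2 a - 2*t*(Lam j a * Lam l a * s2 a) + t^2 * (Lam l a * Lam l a * s2 a))"
    unfolding Q_def by (rule sum.cong) (auto simp: algebra_simps power2_eq_square)
  also have "\<dots> = S j j - 2*t*C + t^2*L"
    unfolding C_def L_def sem_cov_def by (simp add: sum.distrib sum_subtractf sum_distrib_left)
  also have "\<dots> = S j j - C*C/L" unfolding t_def using Lp by (simp add: field_simps power2_eq_square)
  finally have QS: "Q = S j j - S j l * S l j / S l l" unfolding C_def L_def using Ssym[of l j] by simp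
  define f where "f a = (Lam j a - t * Lam l a) * (Lam j a - t * Lam l a) * s2 a" for a
  have fnn: "a < d \<Longrightarrow> 0 \<le> f a" for a unfolding f_def by (rule sqnn)
  have Qge: "A \<subseteq> {..<d} \<Longrightarrow> sum f A \<le> Q" for A
    unfolding Q_def f_def[symmetric] by (rule sum_mono2) (use fnn in auto)
  have w1: "1/(M*(M^2+1)) \<le> 1/M" using M0 sq1[of M]
    by (simp add: divide_le_eq_1 frac_le mult_le_cancel_left1)
  show ?thesis
  proof (cases "Lam l j = 0")
    case True
    have "f j = s2 j" unfolding f_def using True diag[OF jd] by simp
    hence "1/M \<le> Q" using Qge[of "{j}"] s2lo[OF jd] jd by simp
    thus ?thesis using QS w1 by linarith
  next
    case False
    hence "(j,l) \<in> E\<^sup>*" using support ld jd by blast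
    hence "(j,l) \<in> E\<^sup>+" using lj by (auto dest: rtranclD)
    then obtain m where m: "(j,m) \<in> E" "(m,l) \<in> E\<^sup>*" by (meson tranclD)
    have md: "m < d" using Esub m by blast
    have mj: "m \<noteq> j" using m acyc by blast
    have Ljm: "Lam j m = 0"
    proof (rule ccontr)
      assume "Lam j m \<noteq> 0"
      hence "(m,j) \<in> E\<^sup>*" using support jd md by blast
      thus False using cyc2 m(1) by blast
    qed
    have "(m,j) \<notin> E\<^sup>+" using cyc2 m(1) by blast
    hence Llj: "Lam l j = Lam l m * Lam m j" using path_prod m(2) md jd by blast
    have Lmj: "Lam m j = beta m j" using row[OF m(1) jd] mj diag[OF jd] by simp
    define g where "g = Lam l m"
    define b where "b = beta m j"
    have bM': "\<bar>b\<bar> \<le> M" using edge_beta[OF m(1)] unfolding b_def by simp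
    have fj: "f j = (1 - t*g*b)^2 * s2 j" unfolding f_def using diag[OF jd] Llj Lmj
      by (simp add: g_def b_def power2_eq_square algebra_simps)
    have fm: "f m = (t*g)^2 * s2 m" unfolding f_def using Ljm
      by (simp add: g_def power2_eq_square)
    have "f j + f m \<le> Q" using Qge[of "{j,m}"] jd md mj by simp
    moreover have "f j \<ge> (1 - t*g*b)^2 / M"
    proof -
      have "(1 - t*g*b)^2 * (1/M) \<le> (1 - t*g*b)^2 * s2 j" using s2lo[OF jd] by (intro mult_left_mono) auto
      thus ?thesis using fj by simp
    qed
    moreover have "f m \<ge> (t*g)^2 / M"
    proof -
      have "(t*g)^2 * (1/M) \<le> (t*g)^2 * s2 m" using s2lo[OF md] by (intro mult_left_mono) auto
      thus ?thesis using fm by simp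
    qed
    moreover have "(t*g*b)^2/M^2 \<le> (t*g)^2"
    proof -
      have "\<bar>b\<bar>^2 \<le> M^2" using bM' by (intro power_mono) auto
      hence "b^2 \<le> M^2" by simp
      hence "(t*g)^2 * b^2 \<le> (t*g)^2 * M^2" by (intro mult_left_mono) auto
      thus ?thesis using M0 by (simp add: divide_le_eq power_mult_distrib)
    qed
    moreover have "(t*g*b)^2/M^2/M \<le> (t*g)^2/M" using M0
      by (intro divide_right_mono) (use \<open>(t*g*b)^2/M^2 \<le> (t*g)^2\<close> in auto)
    ultimately have "((1 - t*g*b)^2 + (t*g*b)^2/M^2) / M \<le> Q"
      by (simp add: add_divide_distrib)
    moreover have "1/(M^2+1) / M \<le> ((1 - t*g*b)^2 + (t*g*b)^2/M^2) / M"
      using quad_bound[OF M1] M0 by (intro divide_right_mono) auto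
    ultimately have "1/(M*(M^2+1)) \<le> Q" by (simp add: mult.commute)
    thus ?thesis using QS by simp
  qed
qed

lemma decomp:
  assumes jk: "(j,k) \<in> E" and kl: "(k,l) \<in> E\<^sup>+" and ld: "l < d"
  shows "S j l = Lam l k * S j k" "S k l = Lam l k * S k k"
    "\<exists>F. S l l = (Lam l k)^2 * S k k + F \<and> (Lam l k)^2 / M^3 \<le> F"
proof -
  have jd: "j < d" and kd: "k < d" using Esub jk by auto
  define g where "g = Lam l k"
  define f where "f a = Lam l a - g * Lam k a" for a
  have kl': "(k,l) \<in> E\<^sup>*" using kl by simp
  have orth: "Lam j a * f a = 0 \<and> Lam k a * f a = 0" if ad: "a < d" for a
  proof (cases "(k,a) \<in> E\<^sup>+")
    case True
    have "Lam k a = 0" using desc_zero[OF True _ kd ad] by simp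
    moreover have "Lam j a = 0" using desc_zero[OF True _ jd ad] jk by (meson r_into_rtrancl)
    ultimately show ?thesis by simp
  next
    case False
    have "f a = 0" unfolding f_def g_def using path_prod[OF kl' kd ad False] by simp
    thus ?thesis by simp
  qed
  have z1: "(\<Sum>a<d. Lam j a * f a * s2 a) = 0" by (rule sum.neutral) (use orth in auto)
  have z2: "(\<Sum>a<d. Lam k a * f a * s2 a) = 0" by (rule sum.neutral) (use orth in auto)
  have z3: "(\<Sum>a<d. 2 * g * (Lam k a * f a * s2 a)) = 0"
    by (simp add: sum_distrib_left[symmetric] z2)
  have Ll: "Lam l a = g * Lam k a + f a" for a unfolding f_def by simp
  have "S j l = (\<Sum>a<d. g * (Lam j a * Lam k a * s2 a) + (Lam j a * f a) * s2 a)"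
    unfolding sem_cov_def by (rule sum.cong) (auto simp: Ll algebra_simps)
  also have "\<dots> = g * S j k" unfolding sem_cov_def using z1 z2
    by (simp add: sum.distrib sum_distrib_left)
  finally show "S j l = Lam l k * S j k" unfolding g_def .
  have "S k l = (\<Sum>a<d. g * (Lam k a * Lam k a * s2 a) + (Lam k a * f a) * s2 a)"
    unfolding sem_cov_def by (rule sum.cong) (auto simp: Ll algebra_simps)
  also have "\<dots> = g * S k k" unfolding sem_cov_def using z1 z2
    by (simp add: sum.distrib sum_distrib_left)
  finally show "S k l = Lam l k * S k k" unfolding g_def .
  define F where "F = (\<Sum>a<d. f a * f a * s2 a)"
  have "S l l = (\<Sum>a<d. g^2 * (Lam k a * Lam k a * s2 a) + 2 * g * ((Lam k a * f a) * s2 a) + f a * f a * s2 a)"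
    unfolding sem_cov_def by (rule sum.cong) (auto simp: Ll algebra_simps power2_eq_square)
  also have "\<dots> = g^2 * S k k + F" unfolding sem_cov_def F_def using z1 z2 z3
    by (simp add: sum.distrib sum_distrib_left)
  finally have SL: "S l l = g^2 * S k k + F" .
  obtain m where m: "(k,m) \<in> E" "(m,l) \<in> E\<^sup>*" using kl by (meson tranclD)
  have md: "m < d" using Esub m by blast
  have mk: "m \<noteq> k" using m acyc by blast
  have Lkm: "Lam k m = 0"
  proof (rule ccontr)
    assume "Lam k m \<noteq> 0"
    hence "(m,k) \<in> E\<^sup>*" using support kd md by blast
    thus False using cyc2 m(1) by blast
  qed
  have "(m,k) \<notin> E\<^sup>+" using cyc2 m(1) by blast
  hence Llk: "Lam l k = Lam l m * Lam m k" using path_prod m(2) md kd by blast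
  have Lmk: "Lam m k = beta m k" using row[OF m(1) kd] mk diag[OF kd] by simp
  have bm: "\<bar>beta m k\<bar> \<le> M" using edge_beta[OF m(1)] by simp
  have fm: "f m = Lam l m" unfolding f_def using Lkm by simp
  have "f m * f m * s2 m \<le> F" unfolding F_def
    by (rule member_le_sum) (use md sqnn in auto)
  moreover have "(Lam l m)^2 / M \<le> f m * f m * s2 m"
  proof -
    have "(Lam l m)^2 * (1/M) \<le> (Lam l m)^2 * s2 m" using s2lo[OF md] by (intro mult_left_mono) auto
    thus ?thesis using fm by (simp add: power2_eq_square)
  qed
  moreover have "g^2 / M^3 \<le> (Lam l m)^2 / M"
  proof -
    have "\<bar>beta m k\<bar>^2 \<le> M^2" using bm by (intro power_mono) auto
    hence "(Lam l m)^2 * (beta m k)^2 \<le> (Lam l m)^2 * M^2" by (intro mult_left_mono) auto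
    hence "g^2 \<le> (Lam l m)^2 * M^2" unfolding g_def Llk Lmk by (simp add: power_mult_distrib)
    hence "g^2 / M^3 \<le> (Lam l m)^2 * M^2 / M^3" using M0 by (intro divide_right_mono) auto
    also have "\<dots> = (Lam l m)^2 / M" using M0 by (simp add: power_numeral_reduce field_simps)
    finally show ?thesis .
  qed
  ultimately have "g^2 / M^3 \<le> F" by linarith
  thus "\<exists>F. S l l = (Lam l k)^2 * S k k + F \<and> (Lam l k)^2 / M^3 \<le> F"
    using SL unfolding g_def by blast
qed

lemma edge_bound:
  assumes jk: "(j,k) \<in> E" and lset: "l \<in> {None} \<union> Some ` ({..<d} - {j, k})"
  shows "1/(2*M^6) \<le> \<bar>pcorr S j k l\<bar>"
proof -
  have jd: "j < d" and kd: "k < d" using Esub jk by auto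
  define b where "b = beta k j"
  define V where "V = S j j"
  define s where "s = s2 k"
  have b2: "1/M^2 \<le> b^2" using edge_beta[OF jk] unfolding b_def by simp
  have V: "1/M \<le> V" unfolding V_def by (rule Sdiag[OF jd])
  have s: "0 < s" "s \<le> M" unfolding s_def using s2pos[OF kd] s2hi[OF kd] by auto
  have Ljk: "Lam j k = 0"
  proof (rule ccontr)
    assume "Lam j k \<noteq> 0"
    hence "(k,j) \<in> E\<^sup>*" using support kd jd by blast
    thus False using cyc2 jk by blast
  qed
  have Skj: "S k j = b * V" using E1[OF jk jd] Ljk unfolding b_def V_def by simp
  hence Sjk: "S j k = b * V" using Ssym by simp
  have Skk: "S k k = b^2 * V + s" using E1[OF jk kd] diag[OF kd] Sjk
    unfolding b_def s_def by (simp add: power2_eq_square)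
  have w1: "1/(M*(M^2+1)) \<le> 1/M" using M0 sq1[of M]
    by (simp add: divide_le_eq_1 frac_le mult_le_cancel_left1)
  show ?thesis
  proof (cases l)
    case None
    have "pcorr S j k l = b*V / sqrt (V*(b^2*V+s))" using None Sjk Skk V_def by (simp add: corr_def)
    thus ?thesis using finalA[OF M1 b2 _ s] V w1 by simp
  next
    case (Some l')
    hence ld: "l' < d" and lj: "l' \<noteq> j" and lk: "l' \<noteq> k" using lset by auto
    show ?thesis
    proof (cases "(k,l') \<in> E\<^sup>+")
      case False
      have "Lam l' k = 0"
      proof (rule ccontr)
        assume "Lam l' k \<noteq> 0"
        hence "(k,l') \<in> E\<^sup>*" using support kd ld by blast
        thus False using False lk by (auto dest: rtranclD)
      qed
      hence Skl: "S k l' = b * S j l'" using E1[OF jk ld] unfolding b_def by simp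
      define C where "C = S j l'"
      define L where "L = S l' l'"
      define W where "W = V - C*C/L"
      have Wb: "1/(M*(M^2+1)) \<le> W" using W_bound[OF jd ld lj] Ssym[of l' j]
        unfolding W_def V_def C_def L_def by simp
      have Lp: "L > 0" using Sdiag[OF ld] M0 unfolding L_def by (smt (verit) divide_pos_pos)
      have p1: "pcov S l' j k = b * W" unfolding pcov_def W_def using Sjk Skl Ssym[of l' k] Lp
        unfolding C_def L_def by (simp add: field_simps)
      have p2: "pcov S l' j j = W" unfolding pcov_def W_def V_def C_def L_def using Ssym[of l' j] by simp
      have p3: "pcov S l' k k = b^2 * W + s" unfolding pcov_def W_def using Skk Skl Ssym[of l' k] Lp
        unfolding C_def L_def by (simp add: field_simps power2_eq_square)
      show ?thesis using Some p1 p2 p3 finalA[OF M1 b2 Wb s] by simp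
    next
      case True
      define g where "g = Lam l' k"
      define K where "K = S k k"
      obtain F where F: "S l' l' = g^2 * K + F" "g^2/M^3 \<le> F"
        using decomp(3)[OF jk True ld] unfolding g_def K_def by blast
      have Sjl: "S j l' = g * (b*V)" using decomp(1)[OF jk True ld] Sjk unfolding g_def by simp
      have Skl: "S k l' = g * K" using decomp(2)[OF jk True ld] unfolding g_def K_def by simp
      have Lp: "0 < g^2 * K + F" using Sdiag[OF ld] M0 F(1) by (smt (verit) divide_pos_pos)
      have p1: "pcov S l' j k = b*V - (g*(b*V))*(g*K)/(g^2*K+F)"
        unfolding pcov_def using Sjk Sjl Skl Ssym[of l' k] F(1) by simp
      have p2: "pcov S l' j j = V - (g*(b*V))*(g*(b*V))/(g^2*K+F)"
        unfolding pcov_def using Sjl Ssym[of l' j] F(1) V_def by simp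
      have p3: "pcov S l' k k = K - (g*K)*(g*K)/(g^2*K+F)"
        unfolding pcov_def using Skl Ssym[of l' k] F(1) K_def by simp
      have hK: "K = b^2*V + s" using Skk K_def by simp
      show ?thesis using Some p1 p2 p3 finalB[OF M1 b2 V s F(2) hK refl Lp] by simp
    qed
  qed
qed

end

theorem lemma1:
  fixes M :: real
  assumes "M > 1"
  shows "\<exists>c>0. \<forall>(d::nat) E u (beta::nat \<Rightarrow> nat \<Rightarrow> real) (s2::nat \<Rightarrow> real) Lam.
           directed_tree d E u \<longrightarrow>
           (\<forall>k<d. \<forall>j<d. beta k j \<noteq> 0 \<longleftrightarrow> (j, k) \<in> E) \<longrightarrow>
           (\<forall>k<d. \<forall>j<d. beta k j \<noteq> 0 \<longrightarrow> \<bar>beta k j\<bar> \<in> {1/M..M}) \<longrightarrow>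
           (\<forall>k<d. s2 k \<in> {1/M..M}) \<longrightarrow>
           sem_solution d beta Lam \<longrightarrow>
           strong_tree_faithful c d E (sem_cov d Lam s2)"
proof -
  have "\<forall>(d::nat) E u (beta::nat \<Rightarrow> nat \<Rightarrow> real) (s2::nat \<Rightarrow> real) Lam.
           directed_tree d E u \<longrightarrow>
           (\<forall>k<d. \<forall>j<d. beta k j \<noteq> 0 \<longleftrightarrow> (j, k) \<in> E) \<longrightarrow>
           (\<forall>k<d. \<forall>j<d. beta k j \<noteq> 0 \<longrightarrow> \<bar>beta k j\<bar> \<in> {1/M..M}) \<longrightarrow>
           (\<forall>k<d. s2 k \<in> {1/M..M}) \<longrightarrow>
           sem_solution d beta Lam \<longrightarrow>
           strong_tree_faithful (1/(2*M^6)) d E (sem_cov d Lam s2)"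
  proof (intro allI impI)
    fix d :: nat and E u and beta :: "nat \<Rightarrow> nat \<Rightarrow> real" and s2 :: "nat \<Rightarrow> real" and Lam
    assume h1: "directed_tree d E u"
      and h2: "\<forall>k<d. \<forall>j<d. beta k j \<noteq> 0 \<longleftrightarrow> (j, k) \<in> E"
      and h3: "\<forall>k<d. \<forall>j<d. beta k j \<noteq> 0 \<longrightarrow> \<bar>beta k j\<bar> \<in> {1/M..M}"
      and h4: "\<forall>k<d. s2 k \<in> {1/M..M}"
      and h5: "sem_solution d beta Lam"
    interpret msetup d E u beta Lam s2 M
      by unfold_locales (use h1 h2 h3 h4 h5 assms in auto)
    show "strong_tree_faithful (1/(2*M^6)) d E (sem_cov d Lam s2)"
      unfolding strong_tree_faithful_def using edge_bound uniq_par by blast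
  qed
  moreover have "(0::real) < 1/(2*M^6)" using assms by simp
  ultimately show ?thesis by blast
qed

end
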